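(* In the setting of the D2EAL algorithm (without periodic reset) described in the context, fix an agent $i$ with $d_i(0)\ge2$ and assume $\Omega_i(t)\subseteq\Omega_i(t-1)$ for all $t=1,\dots,T$. With $\eta_\alpha>0$ arbitrary and the choice $\eta_w=\sqrt{8\log d_i(0)/T}$, $$R_i^S(T):=\hat L_{T,i}-\min_{j\in\Lambda_i(T)}\bar L_{T,j}\le\sqrt{\tfrac{T}{2}\log d_i(0)}.$$
   Context: Setup. There are $N\ge 1$ agents indexed by $i\in[N]$ and a horizon $T\ge1$. The outcome space $\mathcal Y$ and action space $\mathcal A$ are convex subsets of $\mathbb R^n$. The loss $l:\mathcal A\times\mathcal Y\to[0,1]$ is convex in its first argument. The target sequence $y_1,\dots,y_T\in\mathcal Y$ is arbitrary. For each agent $i$ and each $t\ge1$, an "expert" supplies an arbitrary prediction $f_{t,i}\in\mathcal A$ of $y_t$ (available at time $t-1$). Agents communicate over a time-varying undirected graph; $\Omega_i(t)$ is the set of neighbours of agent $i$ at time $t$, $\Lambda_i(t):=\Omega_i(t)\cup\{i\}$ and $d_i(t):=|\Lambda_i(t)|$. D2EAL (without periodic reset). Initialize $\hat f_{0,i}=f_{1,i}$, $\hat\alpha_i(0)=\hat\alpha'_i(0)=\hat w_{ii}(0)=1$ for all $i$. For $t=0,1,\dots,T-1$, each agent $i$ computes: $\alpha_i(t)=\hat\alpha_i(t)/(\hat\alpha_i(t)+\hat\alpha'_i(t))$; individual prediction $\bar f_{t+1,i}=\alpha_i(t)f_{t+1,i}+(1-\alpha_i(t))\hat f_{t,i}$;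 social weights $w_{ij}(t)=\hat w_{jj}(t)/\sum_{j'\in\Lambda_i(t)}\hat w_{j'j'}(t)$ for $j\in\Lambda_i(t)$ and $w_{ij}(t)=0$ otherwise; social prediction $\hat f_{t+1,i}=\sum_{j\in\Lambda_i(t)}w_{ij}(t)\bar f_{t+1,j}$. After $y_{t+1}$ is revealed, define the losses $l_{t+1,i}=l(f_{t+1,i},y_{t+1})$, $\hat l^-_{t+1,i}=l(\hat f_{t,i},y_{t+1})$, $\bar l_{t+1,i}=l(\bar f_{t+1,i},y_{t+1})$, $\hat l_{t+1,i}=l(\hat f_{t+1,i},y_{t+1})$, and update $\hat\alpha_i(t+1)=\hat\alpha_i(t)e^{-\eta_\alpha l_{t+1,i}}$, $\hat\alpha'_i(t+1)=\hat\alpha'_i(t)e^{-\eta_\alpha \hat l^-_{t+1,i}}$, $\hat w_{ii}(t+1)=\hat w_{ii}(t)e^{-\eta_w\bar l_{t+1,i}}$. Cumulative losses: $L_{T,i}=\sum_{t=1}^T l_{t,i}$, $\hat L^-_{T,i}=\sum_{t=1}^T\hat l^-_{t,i}$, $\bar L_{T,i}=\sum_{t=1}^T\bar l_{t,i}$, $\hat L_{T,i}=\sum_{t=1}^T\hat l_{t,i}$. *)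

theory Defs
  imports "HOL-Analysis.Analysis"
begin

text \<open>Agents are natural numbers i < N.  Omega i t is the neighbour set of agent i at time t.
  f t i is the expert prediction of agent i for y t (t \<ge> 1), l is the loss,
  ea = eta_alpha, ew = eta_w.\<close>

definition Lam :: "(nat \<Rightarrow> nat \<Rightarrow> nat set) \<Rightarrow> nat \<Rightarrow> nat \<Rightarrow> nat set" where
  "Lam Omega i t = insert i (Omega i t)"

definition deg :: "(nat \<Rightarrow> nat \<Rightarrow> nat set) \<Rightarrow> nat \<Rightarrow> nat \<Rightarrow> nat" where
  "deg Omega i t = card (Lam Omega i t)"

text \<open>State at time t: (alpha_hat, alpha'_hat, w_hat (diagonal), f_hat_t).\<close>
fun d2eal_state ::
  "(nat \<Rightarrow> nat \<Rightarrow> nat set) \<Rightarrow> (nat \<Rightarrow> nat \<Rightarrow> 'a::real_vector) \<Rightarrow> (nat \<Rightarrow> 'a)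
   \<Rightarrow> ('a \<Rightarrow> 'a \<Rightarrow> real) \<Rightarrow> real \<Rightarrow> real \<Rightarrow> nat
   \<Rightarrow> (nat \<Rightarrow> real) \<times> (nat \<Rightarrow> real) \<times> (nat \<Rightarrow> real) \<times> (nat \<Rightarrow> 'a)" where
  "d2eal_state Omega f y l ea ew 0 = ((\<lambda>i. 1), (\<lambda>i. 1), (\<lambda>i. 1), (\<lambda>i. f 1 i))"
| "d2eal_state Omega f y l ea ew (Suc t) =
     (case d2eal_state Omega f y l ea ew t of (ah, ah', wh, fh) \<Rightarrow>
       let al = (\<lambda>i. ah i / (ah i + ah' i));
           fb = (\<lambda>i. al i *\<^sub>R f (Suc t) i + (1 - al i) *\<^sub>R fh i);
           fh_new = (\<lambda>i. \<Sum>j\<in>Lam Omega i t.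
                         (wh j / (\<Sum>j'\<in>Lam Omega i t. wh j')) *\<^sub>R fb j)
       in ((\<lambda>i. ah i * exp (- ea * l (f (Suc t) i) (y (Suc t)))),
           (\<lambda>i. ah' i * exp (- ea * l (fh i) (y (Suc t)))),
           (\<lambda>i. wh i * exp (- ew * l (fb i) (y (Suc t)))),
           fh_new))"

definition alpha_hat where "alpha_hat Omega f y l ea ew t i = fst (d2eal_state Omega f y l ea ew t) i"
definition alpha_hat' where "alpha_hat' Omega f y l ea ew t i = fst (snd (d2eal_state Omega f y l ea ew t)) i"
definition w_hat where "w_hat Omega f y l ea ew t i = fst (snd (snd (d2eal_state Omega f y l ea ew t))) i"

definition f_hat where "f_hat Omega f y l ea ew t i = snd (snd (snd (d2eal_state Omega f y l ea ew t))) i"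

definition alpha :: "(nat \<Rightarrow> nat \<Rightarrow> nat set) \<Rightarrow> (nat \<Rightarrow> nat \<Rightarrow> 'a::real_vector) \<Rightarrow> (nat \<Rightarrow> 'a)
   \<Rightarrow> ('a \<Rightarrow> 'a \<Rightarrow> real) \<Rightarrow> real \<Rightarrow> real \<Rightarrow> nat \<Rightarrow> nat \<Rightarrow> real" where
  "alpha Omega f y l ea ew t i =
     alpha_hat Omega f y l ea ew t i / (alpha_hat Omega f y l ea ew t i + alpha_hat' Omega f y l ea ew t i)"

text \<open>Individual prediction \<open>\<bar>f_{t+1,i}\<close>; meaningful for time index \<open>\<ge> 1\<close>.\<close>
definition f_bar where
  "f_bar Omega f y l ea ew t i =
     alpha Omega f y l ea ew (t - 1) i *\<^sub>R f t i
     + (1 - alpha Omega f y l ea ew (t - 1) i) *\<^sub>R f_hat Omega f y l ea ew (t - 1) i"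

definition L_hat where
  "L_hat Omega f y l ea ew T i = (\<Sum>t=1..T. l (f_hat Omega f y l ea ew t i) (y t))"

definition L_bar where
  "L_bar Omega f y l ea ew T i = (\<Sum>t=1..T. l (f_bar Omega f y l ea ew t i) (y t))"

end

theory Submission imports Defs "HOL-Probability.Hoeffding" begin

context
  fixes Omega :: "nat \<Rightarrow> nat \<Rightarrow> nat set" and f :: "nat \<Rightarrow> nat \<Rightarrow> 'a::real_vector"
    and y :: "nat \<Rightarrow> 'a" and l :: "'a \<Rightarrow> 'a \<Rightarrow> real" and ea ew :: real
begin

abbreviation "AH \<equiv> alpha_hat Omega f y l ea ew"
abbreviation "AH' \<equiv> alpha_hat' Omega f y l ea ew"
abbreviation "WH \<equiv> w_hat Omega f y l ea ew"
abbreviation "FH \<equiv> f_hat Omega f y l ea ew"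
abbreviation "FB \<equiv> f_bar Omega f y l ea ew"
abbreviation "AL \<equiv> alpha Omega f y l ea ew"

lemma AH_Suc: "AH (Suc t) i = AH t i * exp (- ea * l (f (Suc t) i) (y (Suc t)))"
  by (cases "d2eal_state Omega f y l ea ew t") (simp add: alpha_hat_def Let_def)
lemma AH'_Suc: "AH' (Suc t) i = AH' t i * exp (- ea * l (FH t i) (y (Suc t)))"
  by (cases "d2eal_state Omega f y l ea ew t") (simp add: alpha_hat'_def f_hat_def Let_def)
lemma WH_Suc: "WH (Suc t) i = WH t i * exp (- ew * l (FB (Suc t) i) (y (Suc t)))"
  by (cases "d2eal_state Omega f y l ea ew t")
     (simp add: w_hat_def f_bar_def alpha_def alpha_hat_def alpha_hat'_def f_hat_def Let_def)
lemma FH_Suc: "FH (Suc t) i = (\<Sum>j\<in>Lam Omega i t. (WH t j / (\<Sum>j'\<in>Lam Omega i t. WH t j')) *\<^sub>R FB (Suc t) j)"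
  by (cases "d2eal_state Omega f y l ea ew t")
     (simp add: w_hat_def f_bar_def alpha_def alpha_hat_def alpha_hat'_def f_hat_def Let_def)
lemma FB_Suc: "FB (Suc t) i = AL t i *\<^sub>R f (Suc t) i + (1 - AL t i) *\<^sub>R FH t i"
  by (simp add: f_bar_def)
lemma base: "AH 0 i = 1" "AH' 0 i = 1" "WH 0 i = 1" "FH 0 i = f 1 i"
  by (simp_all add: alpha_hat_def alpha_hat'_def w_hat_def f_hat_def)

lemma pos: "AH t i > 0 \<and> AH' t i > 0 \<and> WH t i > 0"
  by (induction t) (simp_all add: base AH_Suc AH'_Suc WH_Suc)

lemma AL_bounds: "0 \<le> AL t i \<and> AL t i \<le> 1"
  using pos[of t i] by (simp add: alpha_def divide_simps)

lemma WH_exp: "WH t j = exp (- ew * (\<Sum>s=1..t. l (FB s j) (y s)))"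
  by (induction t) (simp_all add: base WH_Suc sum.cl_ivl_Suc mult_exp_exp algebra_simps)


lemma hoeff_step:
  fixes m h :: real
  assumes "0 \<le> m" "m \<le> 1" "h \<ge> 0"
  shows "1 - m + m * exp (- h) \<le> exp (- h * m + h\<^sup>2 / 8)"
proof -
  have pos: "1 + (1 - m) * (exp h - 1) > 0"
    using assms by (smt (verit) exp_ge_zero mult_nonneg_nonneg one_le_exp_iff)
  have "- h * (1 - m) + ln (1 + (1 - m) * (exp h - 1)) \<le> h\<^sup>2 / 8"
    using Hoeffdings_lemma_aux[of h "1 - m"] assms by simp
  hence "ln (1 + (1 - m) * (exp h - 1)) \<le> h * (1 - m) + h\<^sup>2 / 8" by simp
  hence "1 + (1 - m) * (exp h - 1) \<le> exp (h * (1 - m) + h\<^sup>2 / 8)"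
    using pos by (metis exp_le_cancel_iff exp_ln)
  hence "exp (- h) * (1 + (1 - m) * (exp h - 1)) \<le> exp (- h) * exp (h * (1 - m) + h\<^sup>2 / 8)"
    by (simp)
  moreover have "exp (- h) * (1 + (1 - m) * (exp h - 1)) = 1 - m + m * exp (- h)"
    by (simp add: algebra_simps exp_minus field_simps)
  moreover have "exp (- h) * exp (h * (1 - m) + h\<^sup>2 / 8) = exp (- h * m + h\<^sup>2 / 8)"
    by (simp add: mult_exp_exp algebra_simps)
  ultimately show ?thesis by simp
qed

lemma exp_chord:
  fixes x h :: real
  assumes "0 \<le> x" "x \<le> 1"
  shows "exp (- h * x) \<le> 1 - x + x * exp (- h)"
proof -
  have "exp ((1 - x) * 0 + x * (- h)) \<le> (1 - x) * exp 0 + x * exp (- h)"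
    using convex_onD[OF exp_convex, of x 0 "- h"] assms by simp
  thus ?thesis by (simp add: algebra_simps)
qed


lemma Lam_facts:
  assumes om: "\<And>j t. j < N \<Longrightarrow> Omega j t \<subseteq> {..<N} - {j}" and "j < N"
  shows "finite (Lam Omega j t)" "Lam Omega j t \<subseteq> {..<N}" "j \<in> Lam Omega j t"
proof -
  show sub: "Lam Omega j t \<subseteq> {..<N}" using om[of j t] assms(2) by (auto simp: Lam_def)
  thus "finite (Lam Omega j t)" using finite_subset by blast
  show "j \<in> Lam Omega j t" by (simp add: Lam_def)
qed

lemma wsum_pos: "finite A \<Longrightarrow> A \<noteq> {} \<Longrightarrow> (\<Sum>j\<in>A. WH t j) > 0"
  using pos by (simp add: sum_pos)

lemma in_Acts:
  assumes cA: "convex Acts"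
    and fA: "\<And>t j. t \<ge> 1 \<Longrightarrow> j < N \<Longrightarrow> f t j \<in> Acts"
    and om: "\<And>j t. j < N \<Longrightarrow> Omega j t \<subseteq> {..<N} - {j}"
  shows "j < N \<Longrightarrow> FH t j \<in> Acts \<and> FB (Suc t) j \<in> Acts"
proof (induction t arbitrary: j)
  have fb: "FB (Suc t) j \<in> Acts" if "FH t j \<in> Acts" "j < N" for t j
    unfolding FB_Suc using AL_bounds[of t j] convexD_alt[OF cA that(1) fA[of "Suc t" j], of "AL t j"] that
    by (simp add: algebra_simps)
  {
    case 0
    then show ?case using fb fA[of 1 j] by (simp add: base)
  next
    case (Suc t)
    have fh: "FH (Suc t) j \<in> Acts"
      unfolding FH_Suc
    proof (rule convex_sum[OF _ cA])
      show "finite (Lam Omega j t)" using Lam_facts[OF om Suc.prems] by simp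
      have "(\<Sum>j\<in>Lam Omega j t. WH t j) > 0"
        using Lam_facts[OF om Suc.prems] by (intro wsum_pos) blast+
      thus "(\<Sum>i\<in>Lam Omega j t. WH t i / (\<Sum>j'\<in>Lam Omega j t. WH t j')) = 1"
        by (simp add: sum_divide_distrib[symmetric])
      show "\<And>i. i \<in> Lam Omega j t \<Longrightarrow> 0 \<le> WH t i / (\<Sum>j'\<in>Lam Omega j t. WH t j')"
        using pos by (simp add: sum_nonneg less_imp_le)
      show "\<And>i. i \<in> Lam Omega j t \<Longrightarrow> FB (Suc t) i \<in> Acts"
        using Suc.IH Lam_facts(2)[OF om Suc.prems] by blast
    qed
    then show ?case using fb Suc.prems by blast
  }
qed


lemma key_step:
  assumes cA: "convex Acts"
    and fA: "\<And>t j. t \<ge> 1 \<Longrightarrow> j < N \<Longrightarrow> f t j \<in> Acts"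
    and om: "\<And>j t. j < N \<Longrightarrow> Omega j t \<subseteq> {..<N} - {j}"
    and lb: "\<And>a b. a \<in> Acts \<Longrightarrow> b \<in> Ys \<Longrightarrow> 0 \<le> l a b \<and> l a b \<le> 1"
    and lc: "\<And>b. b \<in> Ys \<Longrightarrow> convex_on Acts (\<lambda>a. l a b)"
    and yY: "\<And>t. t \<ge> 1 \<Longrightarrow> y t \<in> Ys"
    and iN: "i < N" and ew0: "ew \<ge> 0"
  shows "(\<Sum>j\<in>Lam Omega i t. WH (Suc t) j)
         \<le> exp (- ew * l (FH (Suc t) i) (y (Suc t)) + ew\<^sup>2 / 8) * (\<Sum>j\<in>Lam Omega i t. WH t j)"
proof -
  define A where "A = Lam Omega i t"
  have finA: "finite A" and subA: "A \<subseteq> {..<N}" and iA: "i \<in> A"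
    using Lam_facts[OF om iN] unfolding A_def by blast+
  have neA: "A \<noteq> {}" using iA by blast
  define W where "W = (\<Sum>j\<in>A. WH t j)"
  have Wpos: "W > 0" unfolding W_def using wsum_pos[OF finA neA] .
  define p where "p j = WH t j / W" for j
  define x where "x j = l (FB (Suc t) j) (y (Suc t))" for j
  define m where "m = (\<Sum>j\<in>A. p j * x j)"
  have p0: "p j \<ge> 0" for j unfolding p_def using pos[of t j] Wpos by simp
  have p1: "(\<Sum>j\<in>A. p j) = 1" unfolding p_def W_def using Wpos W_def
    by (simp add: sum_divide_distrib[symmetric])
  have yin: "y (Suc t) \<in> Ys" using yY by simp
  have FBin: "FB (Suc t) j \<in> Acts" if "j \<in> A" for j
    using in_Acts[OF cA fA om] subA that by blast
  have x01: "0 \<le> x j \<and> x j \<le> 1" if "j \<in> A" for j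
    unfolding x_def using lb[OF FBin[OF that] yin] .
  have m0: "0 \<le> m" unfolding m_def using p0 x01 by (intro sum_nonneg) simp
  have m1: "m \<le> 1"
  proof -
    have "m \<le> (\<Sum>j\<in>A. p j)" unfolding m_def
      using p0 x01 by (intro sum_mono) (simp add: mult_left_le)
    thus ?thesis using p1 by simp
  qed
  have hl: "l (FH (Suc t) i) (y (Suc t)) \<le> m"
  proof -
    have "FH (Suc t) i = (\<Sum>j\<in>A. p j *\<^sub>R FB (Suc t) j)"
      unfolding FH_Suc A_def p_def W_def ..
    also have "l \<dots> (y (Suc t)) \<le> (\<Sum>j\<in>A. p j * l (FB (Suc t) j) (y (Suc t)))"
      by (rule convex_on_sum[OF finA neA lc[OF yin] p1 p0 FBin])
    finally show ?thesis unfolding m_def x_def .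
  qed
  have "(\<Sum>j\<in>A. WH (Suc t) j) = W * (\<Sum>j\<in>A. p j * exp (- ew * x j))"
    unfolding WH_Suc p_def x_def sum_distrib_left using Wpos by (intro sum.cong) auto
  also have "(\<Sum>j\<in>A. p j * exp (- ew * x j)) \<le> (\<Sum>j\<in>A. p j * (1 - x j + x j * exp (- ew)))"
    using p0 x01 exp_chord by (intro sum_mono mult_left_mono) auto
  also have "\<dots> = 1 - m + m * exp (- ew)"
    unfolding m_def using p1
    by (simp add: algebra_simps sum.distrib sum_subtractf sum_distrib_right[symmetric])
       (simp add: sum_distrib_left algebra_simps)
  also have "\<dots> \<le> exp (- ew * m + ew\<^sup>2 / 8)" using hoeff_step m0 m1 ew0 by blast
  also have "\<dots> \<le> exp (- ew * l (FH (Suc t) i) (y (Suc t)) + ew\<^sup>2 / 8)"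
    using hl ew0 by (simp add: mult_left_mono)
  finally show ?thesis unfolding A_def W_def using Wpos[unfolded W_def A_def]
    by (simp add: mult.commute mult_left_mono)
qed

end


theorem corollary2:
  fixes N T :: nat
    and Acts Ys :: "'a::euclidean_space set"
    and l :: "'a \<Rightarrow> 'a \<Rightarrow> real"
    and y :: "nat \<Rightarrow> 'a"
    and f :: "nat \<Rightarrow> nat \<Rightarrow> 'a"
    and Omega :: "nat \<Rightarrow> nat \<Rightarrow> nat set"
    and ea ew :: real
    and i :: nat
  assumes "N \<ge> 1" and "T \<ge> 1"
    and "convex Acts" and "convex Ys"
    and "\<And>a b. a \<in> Acts \<Longrightarrow> b \<in> Ys \<Longrightarrow> 0 \<le> l a b \<and> l a b \<le> 1"
    and "\<And>b. b \<in> Ys \<Longrightarrow> convex_on Acts (\<lambda>a. l a b)"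
    and "\<And>t. t \<ge> 1 \<Longrightarrow> y t \<in> Ys"
    and "\<And>t j. t \<ge> 1 \<Longrightarrow> j < N \<Longrightarrow> f t j \<in> Acts"
    and "\<And>j t. j < N \<Longrightarrow> Omega j t \<subseteq> {..<N} - {j}"
    and "\<And>j k t. j < N \<Longrightarrow> k < N \<Longrightarrow> k \<in> Omega j t \<longleftrightarrow> j \<in> Omega k t"
    and "i < N"
    and "deg Omega i 0 \<ge> 2"
    and "\<And>t. 1 \<le> t \<Longrightarrow> t \<le> T \<Longrightarrow> Omega i t \<subseteq> Omega i (t - 1)"
    and "ea > 0"
    and "ew = sqrt (8 * ln (real (deg Omega i 0)) / real T)"
  shows "L_hat Omega f y l ea ew T i
           - Min ((\<lambda>j. L_bar Omega f y l ea ew T j) ` Lam Omega i T)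
         \<le> sqrt (real T / 2 * ln (real (deg Omega i 0)))"
proof -
  note om = assms(9) and cA = assms(3) and fA = assms(8) and lb = assms(5) and lc = assms(6)
    and yY = assms(7) and iN = assms(11)
  define d where "d = deg Omega i 0"
  define c where "c = ln (real d)"
  have d2: "real d \<ge> 2" using assms(12) unfolding d_def by simp
  have cpos: "c > 0" unfolding c_def using d2 by simp
  have Tpos: "real T > 0" using assms(2) by simp
  have ewpos: "ew > 0" using assms(15) cpos Tpos unfolding c_def d_def by simp
  have ew2: "ew\<^sup>2 = 8 * c / real T" using assms(15) cpos Tpos unfolding c_def d_def by simp
  have wnn: "w_hat Omega f y l ea ew t j \<ge> 0" for t j
    using pos[of Omega f y l ea ew t j] by simp
  define HL where "HL s = l (f_hat Omega f y l ea ew s i) (y s)" for s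
  have Lsub: "Lam Omega i (Suc t) \<subseteq> Lam Omega i t" if "Suc t \<le> T" for t
    using assms(13)[of "Suc t"] that by (auto simp: Lam_def)
  have finL: "finite (Lam Omega i t)" for t using Lam_facts[where Omega=Omega and N=N, OF om iN] by blast
  have D: "t < T \<longrightarrow> (\<Sum>j\<in>Lam Omega i t. w_hat Omega f y l ea ew (Suc t) j)
     \<le> real d * exp (- ew * (\<Sum>s=1..Suc t. HL s) + real (Suc t) * ew\<^sup>2 / 8)" for t
  proof (induction t)
    case 0
    have "(\<Sum>j\<in>Lam Omega i 0. w_hat Omega f y l ea ew 0 j) = real d"
      by (simp add: base d_def deg_def)
    then show ?case using key_step[where Omega=Omega and f=f and y=y and l=l and ea=ea and N=N and Acts=Acts and Ys=Ys, OF cA fA om lb lc yY iN, of ew 0] ewpos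
      by (simp add: HL_def mult.commute)
  next
    case (Suc t)
    show ?case
    proof
      assume st: "Suc t < T"
      have "(\<Sum>j\<in>Lam Omega i (Suc t). w_hat Omega f y l ea ew (Suc (Suc t)) j)
          \<le> exp (- ew * HL (Suc (Suc t)) + ew\<^sup>2 / 8) * (\<Sum>j\<in>Lam Omega i (Suc t). w_hat Omega f y l ea ew (Suc t) j)"
        using key_step[where Omega=Omega and f=f and y=y and l=l and ea=ea and N=N and Acts=Acts and Ys=Ys, OF cA fA om lb lc yY iN, of ew "Suc t"] ewpos by (simp add: HL_def)
      also have "\<dots> \<le> exp (- ew * HL (Suc (Suc t)) + ew\<^sup>2 / 8) * (\<Sum>j\<in>Lam Omega i t. w_hat Omega f y l ea ew (Suc t) j)"
        using Lsub[of t] st finL wnn by (intro mult_left_mono sum_mono2) auto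
      also have "\<dots> \<le> exp (- ew * HL (Suc (Suc t)) + ew\<^sup>2 / 8) *
          (real d * exp (- ew * (\<Sum>s=1..Suc t. HL s) + real (Suc t) * ew\<^sup>2 / 8))"
        using Suc.IH st by (intro mult_left_mono) auto
      also have "\<dots> = real d * exp (- ew * (\<Sum>s=1..Suc (Suc t). HL s) + real (Suc (Suc t)) * ew\<^sup>2 / 8)"
        by (simp add: sum.cl_ivl_Suc mult_exp_exp algebra_simps add_divide_distrib)
      finally show "(\<Sum>j\<in>Lam Omega i (Suc t). w_hat Omega f y l ea ew (Suc (Suc t)) j)
     \<le> real d * exp (- ew * (\<Sum>s=1..Suc (Suc t). HL s) + real (Suc (Suc t)) * ew\<^sup>2 / 8)" .
    qed
  qed
  obtain T' where T': "T = Suc T'" using assms(2) by (cases T) auto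
  have DT: "(\<Sum>j\<in>Lam Omega i T'. w_hat Omega f y l ea ew T j)
     \<le> real d * exp (- ew * L_hat Omega f y l ea ew T i + real T * ew\<^sup>2 / 8)"
    using D[of T'] T' by (simp add: L_hat_def HL_def)
  define Mn where "Mn = Min ((\<lambda>j. L_bar Omega f y l ea ew T j) ` Lam Omega i T)"
  have "Mn \<in> (\<lambda>j. L_bar Omega f y l ea ew T j) ` Lam Omega i T"
    unfolding Mn_def using finL by (intro Min_in) (auto simp: Lam_def)
  then obtain j0 where j0: "j0 \<in> Lam Omega i T" and Mj: "Mn = L_bar Omega f y l ea ew T j0" by blast
  have j0': "j0 \<in> Lam Omega i T'" using Lsub[of T'] T' j0 by auto
  have "exp (- ew * Mn) = w_hat Omega f y l ea ew T j0"
    unfolding Mj L_bar_def WH_exp ..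
  also have "\<dots> \<le> (\<Sum>j\<in>Lam Omega i T'. w_hat Omega f y l ea ew T j)"
    using j0' finL wnn by (intro member_le_sum) auto
  also have "\<dots> \<le> real d * exp (- ew * L_hat Omega f y l ea ew T i + real T * ew\<^sup>2 / 8)" by (rule DT)
  also have "\<dots> = exp (c - ew * L_hat Omega f y l ea ew T i + real T * ew\<^sup>2 / 8)"
  proof -
    have "exp c = real d" unfolding c_def using d2 by simp
    hence "real d * exp (- ew * L_hat Omega f y l ea ew T i + real T * ew\<^sup>2 / 8)
       = exp c * exp (- ew * L_hat Omega f y l ea ew T i + real T * ew\<^sup>2 / 8)" by simp
    also have "\<dots> = exp (c - ew * L_hat Omega f y l ea ew T i + real T * ew\<^sup>2 / 8)"
      by (simp add: mult_exp_exp algebra_simps)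
    finally show ?thesis .
  qed
  finally have "- ew * Mn \<le> c - ew * L_hat Omega f y l ea ew T i + real T * ew\<^sup>2 / 8" by simp
  hence "ew * (L_hat Omega f y l ea ew T i - Mn) \<le> c + real T * ew\<^sup>2 / 8"
    by (simp add: algebra_simps)
  hence "L_hat Omega f y l ea ew T i - Mn \<le> (c + real T * ew\<^sup>2 / 8) / ew"
    using ewpos by (simp add: field_simps)
  also have "(c + real T * ew\<^sup>2 / 8) / ew = 2 * c / ew"
    using ew2 Tpos by simp
  also have "2 * c / ew = sqrt (real T / 2 * c)"
  proof (rule real_sqrt_unique[symmetric])
    show "(2 * c / ew)\<^sup>2 = real T / 2 * c"
    proof -
      have "(2 * c / ew)\<^sup>2 = 4 * c\<^sup>2 / ew\<^sup>2" by (simp add: power_divide power_mult_distrib)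
      also have "\<dots> = 4 * c\<^sup>2 / (8 * c / real T)" using ew2 by simp
      also have "\<dots> = real T / 2 * c" using cpos Tpos by (simp add: field_simps power2_eq_square)
      finally show ?thesis .
    qed
    show "0 \<le> 2 * c / ew" using cpos ewpos by simp
  qed
  finally show ?thesis unfolding Mn_def c_def d_def .
qed

end
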